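(* Let $\mathbf{Q}=(Q,Z,\cdot)$ be a finite automaton, $q\in Q$ and $a\in Z$. If the identity $\Gamma(\mathbf{Q},q)$ holds in a Conway category $\mathcal{C}$, then so does the identity $\Gamma(\mathbf{Q},qa)$.
   Context: Cartesian categories have chosen finite products (terminal object $T$, projections $\pi_i$, tupling $\langle\cdot\rangle$, $!_A:A\to T$, $f\times g$), strictly associative; composition is written $g\circ f$; $\Delta_{A^n}=\langle 1_A,\ldots,1_A\rangle:A\to A^n$. A dagger operation maps $f:A\times C\to A$ to $f^\dagger:C\to A$. A Conway category is a cartesian category with dagger satisfying: $(f\circ(1_A\times g))^\dagger=f^\dagger\circ g$ ($f:A\times B\to A$, $g:C\to B$); $f^{\dagger\dagger}=(f\circ(\Delta_{A^2}\times 1_C))^\dagger$ ($f:A\times A\times C\to A$); $(f\circ\langle g,\pi_2^{A\times C}\rangle)^\dagger=f\circ\langle (g\circ\langle f,\pi_2^{B\times C}\rangle)^\dagger,1_C\rangle$ ($f:B\times C\to A$, $g:A\times C\to B$). A finite automaton $\mathbf{Q}=(Q,Z,\cdot)$ has finite nonempty state set $Q$, finite nonempty input alphabet $Z$ and action $Q\times Z\to Q$, written $qa=q\cdot a$. Write $Q=\{q_1,\ldots,q_n\}$, identified with $\{1,\ldots,n\}$, and $Z=\{a_1,\ldots,a_m\}$. For an object $A$ and $i\in[n]$ let $\rho_i^{\mathbf{Q},A}=\langle\pi^{A^n}_{ia_1},\ldots,\pi^{A^n}_{ia_m}\rangle:A^n\to A^m$ ($ia_j$ is the index of $q_i\cdot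 a_j$). For $f:A^m\times C\to A$ let $f^{\mathbf{Q},A}:A^n\times C\to A^n$ have components $\pi_i^{A^n}\circ f^{\mathbf{Q},A}=f\circ(\rho_i^{\mathbf{Q},A}\times 1_C)$. For a state $q_i$, the identity $\Gamma(\mathbf{Q},q_i)$ holds in $\mathcal{C}$ if $\pi_i^{A^n}\circ(f^{\mathbf{Q},A})^\dagger=(f\circ(\Delta_{A^m}\times 1_C))^\dagger$ for all objects $A,C$ and all $f:A^m\times C\to A$. *)

theory Defs
  imports Main
begin

text \<open>A category presented by a set of arrows with domain/codomain (objects are all
elements of the object type), equipped with chosen finite products given by a
list-indexed product operation on objects that is strictly associative, and with a
dagger operation.  The dagger is indexed by the parameter object C:
for f : A \<times> C \<rightarrow> A, dag C f : C \<rightarrow> A.\<close>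

record ('o, 'm) dcat =
  arr  :: "'m set"
  cdom :: "'m \<Rightarrow> 'o"
  ccod :: "'m \<Rightarrow> 'o"
  cmp  :: "'m \<Rightarrow> 'm \<Rightarrow> 'm"          \<comment> \<open>cmp g f = g \<circ> f\<close>
  idm  :: "'o \<Rightarrow> 'm"
  prd  :: "'o list \<Rightarrow> 'o"             \<comment> \<open>A1 \<times> ... \<times> An; prd [] = T\<close>
  prj  :: "'o list \<Rightarrow> nat \<Rightarrow> 'm"     \<comment> \<open>prj As i = \<pi>_i (0-based)\<close>
  tpl  :: "'o \<Rightarrow> 'm list \<Rightarrow> 'm"
  dag  :: "'o \<Rightarrow> 'm \<Rightarrow> 'm"

definition hom :: "('o,'m) dcat \<Rightarrow> 'o \<Rightarrow> 'o \<Rightarrow> 'm set" where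
  "hom K A B = {f \<in> arr K. cdom K f = A \<and> ccod K f = B}"

definition is_category :: "('o,'m) dcat \<Rightarrow> bool" where
  "is_category K \<longleftrightarrow>
     (\<forall>A. idm K A \<in> hom K A A) \<and>
     (\<forall>f \<in> arr K. \<forall>g \<in> arr K. cdom K g = ccod K f \<longrightarrow>
         cmp K g f \<in> hom K (cdom K f) (ccod K g)) \<and>
     (\<forall>f \<in> arr K. cmp K f (idm K (cdom K f)) = f \<and> cmp K (idm K (ccod K f)) f = f) \<and>
     (\<forall>f \<in> arr K. \<forall>g \<in> arr K. \<forall>h \<in> arr K.
         cdom K g = ccod K f \<longrightarrow> cdom K h = ccod K g \<longrightarrow>
         cmp K h (cmp K g f) = cmp K (cmp K h g) f)"

text \<open>Chosen finite products (n-ary, including the terminal object prd []),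
strictly associative: nested products of nonempty lists are literally the flattened
product, with the projections being the corresponding tuples of projections;
also a unary product is the object itself.\<close>

definition is_cartesian :: "('o,'m) dcat \<Rightarrow> bool" where
  "is_cartesian K \<longleftrightarrow> is_category K \<and>
     (\<forall>As i. i < length As \<longrightarrow> prj K As i \<in> hom K (prd K As) (As ! i)) \<and>
     (\<forall>C fs. (\<forall>f \<in> set fs. f \<in> arr K \<and> cdom K f = C) \<longrightarrow>
        tpl K C fs \<in> hom K C (prd K (map (ccod K) fs)) \<and>
        (\<forall>i < length fs. cmp K (prj K (map (ccod K) fs) i) (tpl K C fs) = fs ! i)) \<and>
     (\<forall>C As h. h \<in> hom K C (prd K As) \<longrightarrow>
        tpl K C (map (\<lambda>i. cmp K (prj K As i) h) [0..<length As]) = h) \<and>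
     (\<forall>A. prd K [A] = A \<and> prj K [A] 0 = idm K A) \<and>
     (\<forall>Ass. (\<forall>As \<in> set Ass. As \<noteq> []) \<longrightarrow>
        prd K (map (prd K) Ass) = prd K (concat Ass) \<and>
        (\<forall>k < length Ass. prj K (map (prd K) Ass) k =
           tpl K (prd K (concat Ass))
             (map (\<lambda>j. prj K (concat Ass) (sum_list (map length (take k Ass)) + j))
                  [0..<length (Ass ! k)])))"

definition ctimes :: "('o,'m) dcat \<Rightarrow> 'm \<Rightarrow> 'm \<Rightarrow> 'm" where
  "ctimes K f g = tpl K (prd K [cdom K f, cdom K g])
     [cmp K f (prj K [cdom K f, cdom K g] 0), cmp K g (prj K [cdom K f, cdom K g] 1)]"

definition cdiag :: "('o,'m) dcat \<Rightarrow> 'o \<Rightarrow> nat \<Rightarrow> 'm" where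
  "cdiag K A n = tpl K A (replicate n (idm K A))"

definition cpow :: "('o,'m) dcat \<Rightarrow> 'o \<Rightarrow> nat \<Rightarrow> 'o" where
  "cpow K A n = prd K (replicate n A)"

definition cprod2 :: "('o,'m) dcat \<Rightarrow> 'o \<Rightarrow> 'o \<Rightarrow> 'o" where
  "cprod2 K A B = prd K [A, B]"

definition is_conway :: "('o,'m) dcat \<Rightarrow> bool" where
  "is_conway K \<longleftrightarrow> is_cartesian K \<and>
     (\<forall>A C f. f \<in> hom K (cprod2 K A C) A \<longrightarrow> dag K C f \<in> hom K C A) \<and>
     \<comment> \<open>parameter identity\<close>
     (\<forall>A B C f g. f \<in> hom K (cprod2 K A B) A \<longrightarrow> g \<in> hom K C B \<longrightarrow>
        dag K C (cmp K f (ctimes K (idm K A) g)) = cmp K (dag K B f) g) \<and>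
     \<comment> \<open>double dagger identity\<close>
     (\<forall>A C f. f \<in> hom K (cprod2 K A (cprod2 K A C)) A \<longrightarrow>
        dag K C (dag K (cprod2 K A C) f) =
        dag K C (cmp K f (ctimes K (cdiag K A 2) (idm K C)))) \<and>
     \<comment> \<open>composition identity\<close>
     (\<forall>A B C f g. f \<in> hom K (cprod2 K B C) A \<longrightarrow> g \<in> hom K (cprod2 K A C) B \<longrightarrow>
        dag K C (cmp K f (tpl K (cprod2 K A C) [g, prj K [A, C] 1])) =
        cmp K f (tpl K C
          [dag K C (cmp K g (tpl K (cprod2 K B C) [f, prj K [B, C] 1])), idm K C]))"

text \<open>Finite automaton with states {0..<n} and inputs {0..<m}; delta i j is the
index of q_i \<cdot> a_j.\<close>

definition is_automaton :: "nat \<Rightarrow> nat \<Rightarrow> (nat \<Rightarrow> nat \<Rightarrow> nat) \<Rightarrow> bool" where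
  "is_automaton n m \<delta> \<longleftrightarrow> 0 < n \<and> 0 < m \<and> (\<forall>i<n. \<forall>j<m. \<delta> i j < n)"

definition rho :: "('o,'m) dcat \<Rightarrow> nat \<Rightarrow> nat \<Rightarrow> (nat \<Rightarrow> nat \<Rightarrow> nat) \<Rightarrow> 'o \<Rightarrow> nat \<Rightarrow> 'm" where
  "rho K n m \<delta> A i =
     tpl K (cpow K A n) (map (\<lambda>j. prj K (replicate n A) (\<delta> i j)) [0..<m])"

definition fQ :: "('o,'m) dcat \<Rightarrow> nat \<Rightarrow> nat \<Rightarrow> (nat \<Rightarrow> nat \<Rightarrow> nat) \<Rightarrow> 'o \<Rightarrow> 'o \<Rightarrow> 'm \<Rightarrow> 'm" where
  "fQ K n m \<delta> A C f =
     tpl K (cprod2 K (cpow K A n) C)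
       (map (\<lambda>i. cmp K f (ctimes K (rho K n m \<delta> A i) (idm K C))) [0..<n])"

definition Gamma :: "('o,'m) dcat \<Rightarrow> nat \<Rightarrow> nat \<Rightarrow> (nat \<Rightarrow> nat \<Rightarrow> nat) \<Rightarrow> nat \<Rightarrow> bool" where
  "Gamma K n m \<delta> i \<longleftrightarrow>
     (\<forall>A C f. f \<in> hom K (cprod2 K (cpow K A m) C) A \<longrightarrow>
        cmp K (prj K (replicate n A) i) (dag K C (fQ K n m \<delta> A C f)) =
        dag K C (cmp K f (ctimes K (cdiag K A m) (idm K C))))"

end

theory Submission
  imports Defs
begin


locale cart =
  fixes K :: "('o,'m) dcat"
  assumes cart: "is_cartesian K"
begin

lemma cat: "is_category K" using cart unfolding is_cartesian_def by blast

lemma homD: "f \<in> hom K A B \<Longrightarrow> f \<in> arr K \<and> cdom K f = A \<and> ccod K f = B"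
  unfolding hom_def by auto

lemma homI: "f \<in> arr K \<Longrightarrow> cdom K f = A \<Longrightarrow> ccod K f = B \<Longrightarrow> f \<in> hom K A B"
  unfolding hom_def by auto

lemma idm_arr[simp]: "idm K A \<in> arr K" and idm_dom[simp]: "cdom K (idm K A) = A"
  and idm_cod[simp]: "ccod K (idm K A) = A"
  using cat unfolding is_category_def hom_def by auto

lemma cmp_arr[simp]: "g \<in> arr K \<Longrightarrow> f \<in> arr K \<Longrightarrow> cdom K g = ccod K f \<Longrightarrow> cmp K g f \<in> arr K"
  and cmp_dom[simp]: "g \<in> arr K \<Longrightarrow> f \<in> arr K \<Longrightarrow> cdom K g = ccod K f \<Longrightarrow> cdom K (cmp K g f) = cdom K f"
  and cmp_cod[simp]: "g \<in> arr K \<Longrightarrow> f \<in> arr K \<Longrightarrow> cdom K g = ccod K f \<Longrightarrow> ccod K (cmp K g f) = ccod K g"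
  using cat unfolding is_category_def hom_def by auto

lemma id_l[simp]: "f \<in> arr K \<Longrightarrow> ccod K f = B \<Longrightarrow> cmp K (idm K B) f = f"
  and id_r[simp]: "f \<in> arr K \<Longrightarrow> cdom K f = B \<Longrightarrow> cmp K f (idm K B) = f"
  using cat unfolding is_category_def by auto

lemma assoc_r[simp]: "f \<in> arr K \<Longrightarrow> g \<in> arr K \<Longrightarrow> h \<in> arr K \<Longrightarrow> cdom K g = ccod K f \<Longrightarrow>
   cdom K h = ccod K g \<Longrightarrow> cmp K (cmp K h g) f = cmp K h (cmp K g f)"
  using cat unfolding is_category_def by metis

lemma prj_arr[simp]: "i < length As \<Longrightarrow> prj K As i \<in> arr K"
  and prj_dom[simp]: "i < length As \<Longrightarrow> cdom K (prj K As i) = prd K As"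
  and prj_cod[simp]: "i < length As \<Longrightarrow> ccod K (prj K As i) = As ! i"
  using cart unfolding is_cartesian_def hom_def by auto

lemma tpl_gen: "\<forall>f\<in>set fs. f \<in> arr K \<and> cdom K f = X \<Longrightarrow>
   tpl K X fs \<in> hom K X (prd K (map (ccod K) fs)) \<and>
   (\<forall>i<length fs. cmp K (prj K (map (ccod K) fs) i) (tpl K X fs) = fs ! i)"
  using cart unfolding is_cartesian_def by blast

lemma eta: "h \<in> hom K X (prd K As) \<Longrightarrow> tpl K X (map (\<lambda>i. cmp K (prj K As i) h) [0..<length As]) = h"
  using cart unfolding is_cartesian_def by blast

lemma ext: "h \<in> hom K X (prd K As) \<Longrightarrow> h' \<in> hom K X (prd K As) \<Longrightarrow>
  (\<And>i. i < length As \<Longrightarrow> cmp K (prj K As i) h = cmp K (prj K As i) h') \<Longrightarrow> h = h'"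
  by (metis (no_types, lifting) eta atLeastLessThan_iff map_cong set_upt)

lemma ext2: "h \<in> hom K X (prd K [A,B]) \<Longrightarrow> h' \<in> hom K X (prd K [A,B]) \<Longrightarrow>
  cmp K (prj K [A,B] 0) h = cmp K (prj K [A,B] 0) h' \<Longrightarrow>
  cmp K (prj K [A,B] (Suc 0)) h = cmp K (prj K [A,B] (Suc 0)) h' \<Longrightarrow> h = h'"
  apply (rule ext, assumption+)
  by (auto simp: less_2_cases_iff less_Suc_eq)

lemma tpl2_arr[simp]: "f \<in> arr K \<Longrightarrow> g \<in> arr K \<Longrightarrow> cdom K f = X \<Longrightarrow> cdom K g = X \<Longrightarrow> tpl K X [f,g] \<in> arr K"
  and tpl2_dom[simp]: "f \<in> arr K \<Longrightarrow> g \<in> arr K \<Longrightarrow> cdom K f = X \<Longrightarrow> cdom K g = X \<Longrightarrow> cdom K (tpl K X [f,g]) = X"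
  and tpl2_cod[simp]: "f \<in> arr K \<Longrightarrow> g \<in> arr K \<Longrightarrow> cdom K f = X \<Longrightarrow> cdom K g = X \<Longrightarrow> ccod K (tpl K X [f,g]) = prd K [ccod K f, ccod K g]"
  using tpl_gen[of "[f,g]" X] unfolding hom_def by auto

lemma fst_tpl[simp]: "f \<in> arr K \<Longrightarrow> g \<in> arr K \<Longrightarrow> cdom K f = X \<Longrightarrow> cdom K g = X \<Longrightarrow> ccod K f = A \<Longrightarrow> ccod K g = B \<Longrightarrow>
   cmp K (prj K [A,B] 0) (tpl K X [f,g]) = f"
  and snd_tpl[simp]: "f \<in> arr K \<Longrightarrow> g \<in> arr K \<Longrightarrow> cdom K f = X \<Longrightarrow> cdom K g = X \<Longrightarrow> ccod K f = A \<Longrightarrow> ccod K g = B \<Longrightarrow>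
   cmp K (prj K [A,B] (Suc 0)) (tpl K X [f,g]) = g"
  using tpl_gen[of "[f,g]" X] by (auto simp: less_Suc_eq)

lemma push: "cmp K p t = r \<Longrightarrow> p \<in> arr K \<Longrightarrow> t \<in> arr K \<Longrightarrow> cdom K p = ccod K t \<Longrightarrow> k \<in> arr K \<Longrightarrow>
   cdom K t = ccod K k \<Longrightarrow> cmp K p (cmp K t k) = cmp K r k"
  by (metis assoc_r)

lemma fst_tpl'[simp]: "f \<in> arr K \<Longrightarrow> g \<in> arr K \<Longrightarrow> cdom K f = X \<Longrightarrow> cdom K g = X \<Longrightarrow> ccod K f = A \<Longrightarrow> ccod K g = B \<Longrightarrow>
   k \<in> arr K \<Longrightarrow> ccod K k = X \<Longrightarrow> cmp K (prj K [A,B] 0) (cmp K (tpl K X [f,g]) k) = cmp K f k"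
  and snd_tpl'[simp]: "f \<in> arr K \<Longrightarrow> g \<in> arr K \<Longrightarrow> cdom K f = X \<Longrightarrow> cdom K g = X \<Longrightarrow> ccod K f = A \<Longrightarrow> ccod K g = B \<Longrightarrow>
   k \<in> arr K \<Longrightarrow> ccod K k = X \<Longrightarrow> cmp K (prj K [A,B] (Suc 0)) (cmp K (tpl K X [f,g]) k) = cmp K g k"
  by (rule push; simp)+

lemma ctimes_arr[simp]: "f \<in> arr K \<Longrightarrow> g \<in> arr K \<Longrightarrow> ctimes K f g \<in> arr K"
  and ctimes_dom[simp]: "f \<in> arr K \<Longrightarrow> g \<in> arr K \<Longrightarrow> cdom K (ctimes K f g) = prd K [cdom K f, cdom K g]"
  and ctimes_cod[simp]: "f \<in> arr K \<Longrightarrow> g \<in> arr K \<Longrightarrow> ccod K (ctimes K f g) = prd K [ccod K f, ccod K g]"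
  unfolding ctimes_def by simp_all

lemma fst_ctimes[simp]: "f \<in> arr K \<Longrightarrow> g \<in> arr K \<Longrightarrow> ccod K f = B \<Longrightarrow> ccod K g = D \<Longrightarrow>
   cmp K (prj K [B,D] 0) (ctimes K f g) = cmp K f (prj K [cdom K f, cdom K g] 0)"
  and snd_ctimes[simp]: "f \<in> arr K \<Longrightarrow> g \<in> arr K \<Longrightarrow> ccod K f = B \<Longrightarrow> ccod K g = D \<Longrightarrow>
   cmp K (prj K [B,D] (Suc 0)) (ctimes K f g) = cmp K g (prj K [cdom K f, cdom K g] (Suc 0))"
  unfolding ctimes_def by simp_all

lemma fst_ctimes'[simp]: "f \<in> arr K \<Longrightarrow> g \<in> arr K \<Longrightarrow> ccod K f = B \<Longrightarrow> ccod K g = D \<Longrightarrow>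
   k \<in> arr K \<Longrightarrow> ccod K k = prd K [cdom K f, cdom K g] \<Longrightarrow>
   cmp K (prj K [B,D] 0) (cmp K (ctimes K f g) k) = cmp K f (cmp K (prj K [cdom K f, cdom K g] 0) k)"
  and snd_ctimes'[simp]: "f \<in> arr K \<Longrightarrow> g \<in> arr K \<Longrightarrow> ccod K f = B \<Longrightarrow> ccod K g = D \<Longrightarrow>
   k \<in> arr K \<Longrightarrow> ccod K k = prd K [cdom K f, cdom K g] \<Longrightarrow>
   cmp K (prj K [B,D] (Suc 0)) (cmp K (ctimes K f g) k) = cmp K g (cmp K (prj K [cdom K f, cdom K g] (Suc 0)) k)"
   apply (subst push[OF fst_ctimes[of f g B D]]; simp)
  by (subst push[OF snd_ctimes[of f g B D]]; simp)

lemma tplN_hom: "(\<And>i. i < n \<Longrightarrow> fs i \<in> hom K X A) \<Longrightarrow> tpl K X (map fs [0..<n]) \<in> hom K X (prd K (replicate n A))"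
proof -
  assume h: "\<And>i. i < n \<Longrightarrow> fs i \<in> hom K X A"
  have "map (ccod K) (map fs [0..<n]) = replicate n A"
    using h by (simp add: hom_def list_eq_iff_nth_eq)
  with tpl_gen[of "map fs [0..<n]" X] h show ?thesis by (auto simp: hom_def)
qed

lemma prjN_tpl: "(\<And>i. i < n \<Longrightarrow> fs i \<in> hom K X A) \<Longrightarrow> i < n \<Longrightarrow>
  cmp K (prj K (replicate n A) i) (tpl K X (map fs [0..<n])) = fs i"
proof -
  assume h: "\<And>i. i < n \<Longrightarrow> fs i \<in> hom K X A" and i: "i < n"
  have "map (ccod K) (map fs [0..<n]) = replicate n A"
    using h by (simp add: hom_def list_eq_iff_nth_eq)
  with tpl_gen[of "map fs [0..<n]" X] h i show ?thesis by (auto simp: hom_def)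
qed

lemma extN: "h \<in> hom K X (prd K (replicate n A)) \<Longrightarrow> h' \<in> hom K X (prd K (replicate n A)) \<Longrightarrow>
  (\<And>i. i < n \<Longrightarrow> cmp K (prj K (replicate n A) i) h = cmp K (prj K (replicate n A) i) h') \<Longrightarrow> h = h'"
  by (rule ext) auto

end


locale aut = cart K for K :: "('o,'m) dcat" +
  fixes n m :: nat and \<delta> :: "nat \<Rightarrow> nat \<Rightarrow> nat"
  assumes au: "is_automaton n m \<delta>"
begin

lemma dq[simp]: "i < n \<Longrightarrow> j < m \<Longrightarrow> \<delta> i j < n"
  using au unfolding is_automaton_def by blast

lemma rho_hom: "i < n \<Longrightarrow> rho K n m \<delta> A i \<in> hom K (prd K (replicate n A)) (prd K (replicate m A))"
  unfolding rho_def cpow_def by (rule tplN_hom) (simp add: homI)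

lemma rho_arr[simp]: "i < n \<Longrightarrow> rho K n m \<delta> A i \<in> arr K"
  and rho_dom[simp]: "i < n \<Longrightarrow> cdom K (rho K n m \<delta> A i) = prd K (replicate n A)"
  and rho_cod[simp]: "i < n \<Longrightarrow> ccod K (rho K n m \<delta> A i) = prd K (replicate m A)"
  using homD[OF rho_hom] by auto

lemma rho_p: "i < n \<Longrightarrow> j < m \<Longrightarrow>
   cmp K (prj K (replicate m A) j) (rho K n m \<delta> A i) = prj K (replicate n A) (\<delta> i j)"
  unfolding rho_def cpow_def by (rule prjN_tpl) (simp_all add: homI)

lemma cdiag_hom: "cdiag K A k \<in> hom K A (prd K (replicate k A))"
proof -
  have "tpl K A (map (\<lambda>_. idm K A) [0..<k]) \<in> hom K A (prd K (replicate k A))"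
    by (rule tplN_hom) (simp add: homI)
  then show ?thesis unfolding cdiag_def by (simp add: map_replicate_const)
qed

lemma cdiag_p: "j < k \<Longrightarrow> cmp K (prj K (replicate k A) j) (cdiag K A k) = idm K A"
proof -
  assume j: "j < k"
  have "cmp K (prj K (replicate k A) j) (tpl K A (map (\<lambda>_. idm K A) [0..<k])) = idm K A"
    by (rule prjN_tpl[OF _ j]) (simp add: homI)
  then show ?thesis unfolding cdiag_def by (simp add: map_replicate_const)
qed

lemma fQ_hom: "f \<in> hom K (prd K [prd K (replicate m A), C]) A \<Longrightarrow>
   fQ K n m \<delta> A C f \<in> hom K (prd K [prd K (replicate n A), C]) (prd K (replicate n A))"
  unfolding fQ_def cprod2_def cpow_def
  apply (rule tplN_hom)
  apply (rule homI)
  using homD by auto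

lemma fQ_p: "f \<in> hom K (prd K [prd K (replicate m A), C]) A \<Longrightarrow> i < n \<Longrightarrow>
   cmp K (prj K (replicate n A) i) (fQ K n m \<delta> A C f) = cmp K f (ctimes K (rho K n m \<delta> A i) (idm K C))"
  unfolding fQ_def cprod2_def cpow_def
  apply (rule prjN_tpl, rule homI)
  using homD by auto

end


context aut begin

lemma main:
  assumes conw: "is_conway K" and q: "q < n" and a: "a < m" and Gm: "Gamma K n m \<delta> q"
  shows "Gamma K n m \<delta> (\<delta> q a)"
  unfolding Gamma_def cprod2_def cpow_def
proof (intro allI impI)
  fix A C f
  assume fh: "f \<in> hom K (prd K [prd K (replicate m A), C]) A"
  have dag_hom: "\<And>A C f. f \<in> hom K (prd K [A, C]) A \<Longrightarrow> dag K C f \<in> hom K C A"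
    using conw unfolding is_conway_def cprod2_def by blast
  have compid: "\<And>A B C f g. f \<in> hom K (prd K [B, C]) A \<Longrightarrow> g \<in> hom K (prd K [A, C]) B \<Longrightarrow>
     dag K C (cmp K f (tpl K (prd K [A, C]) [g, prj K [A, C] (Suc 0)])) =
     cmp K f (tpl K C [dag K C (cmp K g (tpl K (prd K [B, C]) [f, prj K [B, C] (Suc 0)])), idm K C])"
    using conw unfolding is_conway_def cprod2_def One_nat_def by blast
  have Gm': "\<And>A C f. f \<in> hom K (prd K [prd K (replicate m A), C]) A \<Longrightarrow>
        cmp K (prj K (replicate n A) q) (dag K C (fQ K n m \<delta> A C f)) =
        dag K C (cmp K f (ctimes K (cdiag K A m) (idm K C)))"
    using Gm unfolding Gamma_def cprod2_def cpow_def by blast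
  note fD = homD[OF fh]
  let ?A2 = "prd K [A,A]"
  let ?P = "prd K (replicate n A)"
  let ?P2 = "prd K (replicate n ?A2)"
  let ?M = "prd K (replicate m A)"
  let ?M2 = "prd K (replicate m ?A2)"
  note cdD = homD[OF cdiag_hom[of A m]] homD[OF cdiag_hom[of ?A2 m]]
  have fQh: "fQ K n m \<delta> A C f \<in> hom K (prd K [?P, C]) ?P" using fQ_hom[OF fh] .
  note fQD = homD[OF fQh]
  define x where "x = dag K C (fQ K n m \<delta> A C f)"
  have xh: "x \<in> hom K C ?P" unfolding x_def by (rule dag_hom[OF fQh])
  define y where "y = dag K C (cmp K f (ctimes K (cdiag K A m) (idm K C)))"
  have yh: "y \<in> hom K C A" unfolding y_def
    apply (rule dag_hom, rule homI) using fD cdD by auto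
  define L where "L = tpl K ?M2 (map (\<lambda>j. cmp K (prj K [A,A] 0) (prj K (replicate m ?A2) j)) [0..<m])"
  have Lh: "L \<in> hom K ?M2 ?M" unfolding L_def by (rule tplN_hom) (simp add: homI)
  have L_p: "\<And>j. j < m \<Longrightarrow> cmp K (prj K (replicate m A) j) L = cmp K (prj K [A,A] 0) (prj K (replicate m ?A2) j)"
    unfolding L_def by (rule prjN_tpl) (simp_all add: homI)
  note LD = homD[OF Lh]
  define F where "F = tpl K (prd K [?M2, C]) [cmp K f (ctimes K L (idm K C)),
      cmp K (prj K [A,A] 0) (cmp K (prj K (replicate m ?A2) a) (prj K [?M2, C] 0))]"
  have Fh: "F \<in> hom K (prd K [?M2, C]) ?A2" unfolding F_def using fD LD a by (intro homI) auto
  have F_p0: "cmp K (prj K [A,A] 0) F = cmp K f (ctimes K L (idm K C))"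
    unfolding F_def using fD LD a by simp
  have F_p1: "cmp K (prj K [A,A] (Suc 0)) F = cmp K (prj K [A,A] 0) (cmp K (prj K (replicate m ?A2) a) (prj K [?M2, C] 0))"
    unfolding F_def using fD LD a by simp
  note FD = homD[OF Fh]
  define Hc where "Hc i = tpl K (prd K [?P, C]) [cmp K f (ctimes K (rho K n m \<delta> A i) (idm K C)),
      cmp K (prj K (replicate n A) (\<delta> i a)) (prj K [?P, C] 0)]" for i
  have Hch: "\<And>i. i < n \<Longrightarrow> Hc i \<in> hom K (prd K [?P, C]) ?A2" unfolding Hc_def using fD a by (intro homI) auto
  have Hc_p0: "\<And>i. i < n \<Longrightarrow> cmp K (prj K [A,A] 0) (Hc i) = cmp K f (ctimes K (rho K n m \<delta> A i) (idm K C))"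
    unfolding Hc_def using fD a by simp
  have Hc_p1: "\<And>i. i < n \<Longrightarrow> cmp K (prj K [A,A] (Suc 0)) (Hc i) = cmp K (prj K (replicate n A) (\<delta> i a)) (prj K [?P, C] 0)"
    unfolding Hc_def using fD a by simp
  note HcD = homD[OF Hch]
  define H where "H = tpl K (prd K [?P, C]) (map Hc [0..<n])"
  have Hh: "H \<in> hom K (prd K [?P, C]) ?P2" unfolding H_def by (rule tplN_hom) (rule Hch)
  have H_p: "\<And>i. i < n \<Longrightarrow> cmp K (prj K (replicate n ?A2) i) H = Hc i" unfolding H_def by (rule prjN_tpl) (rule Hch)
  note HD = homD[OF Hh]
  define G where "G = tpl K (prd K [?P2, C]) (map (\<lambda>i. cmp K (prj K [A,A] 0) (cmp K (prj K (replicate n ?A2) i) (prj K [?P2, C] 0))) [0..<n])"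
  have Gh: "G \<in> hom K (prd K [?P2, C]) ?P" unfolding G_def by (rule tplN_hom) (simp add: homI)
  have G_p: "\<And>i. i < n \<Longrightarrow> cmp K (prj K (replicate n A) i) G = cmp K (prj K [A,A] 0) (cmp K (prj K (replicate n ?A2) i) (prj K [?P2, C] 0))"
    unfolding G_def by (rule prjN_tpl) (simp_all add: homI)
  note GD = homD[OF Gh]
  define H' where "H' = tpl K (prd K [A, C]) [cmp K f (ctimes K (cdiag K A m) (idm K C)), prj K [A, C] 0]"
  have H'h: "H' \<in> hom K (prd K [A, C]) ?A2" unfolding H'_def using fD cdD by (intro homI) auto
  note H'D = homD[OF H'h]
  have G'h: "cmp K (prj K [A,A] 0) (prj K [?A2,C] 0) \<in> hom K (prd K [?A2, C]) A" by (intro homI) auto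

  note T = fD cdD fQD homD[OF fQ_hom[OF Fh]] homD[OF xh] homD[OF yh] LD FD HcD HD GD H'D
  note P = L_p F_p0 F_p1 Hc_p0 Hc_p1 H_p G_p fQ_p[OF fh] fQ_p[OF Fh] rho_p cdiag_p
  note PP = push[OF L_p] push[OF F_p0] push[OF F_p1] push[OF Hc_p0] push[OF Hc_p1] push[OF H_p]
     push[OF G_p] push[OF fQ_p[OF fh]] push[OF fQ_p[OF Fh]] push[OF rho_p] push[OF cdiag_p]

  have eq2: "cmp K G (tpl K (prd K [?P, C]) [H, prj K [?P, C] (Suc 0)]) = fQ K n m \<delta> A C f"
    apply (rule extN[of _ _ n A])
      apply (rule homI; simp add: T)
     apply (rule fQh)
    by (simp add: T P PP)
  have E2: "\<And>i. i < n \<Longrightarrow> cmp K L (cmp K (rho K n m \<delta> ?A2 i) (prj K [?P2, C] 0)) = cmp K (rho K n m \<delta> A i) G"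
    apply (rule extN[of _ _ m A])
      apply (rule homI; simp add: T)
     apply (rule homI; simp add: T)
    by (simp add: T P PP)
  have E1: "\<And>i. i < n \<Longrightarrow> cmp K (ctimes K L (idm K C)) (ctimes K (rho K n m \<delta> ?A2 i) (idm K C)) =
      cmp K (ctimes K (rho K n m \<delta> A i) (idm K C)) (tpl K (prd K [?P2, C]) [G, prj K [?P2, C] (Suc 0)])"
    apply (rule ext2)
       apply (rule homI; simp add: T)
      apply (rule homI; simp add: T)
    by (simp_all add: T E2)
  have eq1: "fQ K n m \<delta> ?A2 C F = cmp K H (tpl K (prd K [?P2, C]) [G, prj K [?P2, C] (Suc 0)])"
    apply (rule extN[of _ _ n ?A2])
      apply (rule fQ_hom[OF Fh])
     apply (rule homI; simp add: T)
    apply (rule ext2[where A=A and B=A and X="prd K [?P2, C]"])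
       apply (rule homI; simp add: T)
      apply (rule homI; simp add: T)
    by (simp_all add: T P PP a E1[symmetric])
  have E3: "cmp K (ctimes K L (idm K C)) (ctimes K (cdiag K ?A2 m) (idm K C)) =
      cmp K (ctimes K (cdiag K A m) (idm K C)) (tpl K (prd K [?A2, C]) [cmp K (prj K [A,A] 0) (prj K [?A2,C] 0), prj K [?A2, C] (Suc 0)])"
    apply (rule ext2)
       apply (rule homI; simp add: T)
      apply (rule homI; simp add: T)
     apply (simp add: T)
     apply (rule extN[of _ _ m A])
       apply (rule homI; simp add: T)
      apply (rule homI; simp add: T)
    by (simp_all add: T P PP)
  have eq3: "cmp K F (ctimes K (cdiag K ?A2 m) (idm K C)) = cmp K H' (tpl K (prd K [?A2, C]) [cmp K (prj K [A,A] 0) (prj K [?A2,C] 0), prj K [?A2, C] (Suc 0)])"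
    apply (rule ext2[where A=A and B=A and X="prd K [?A2, C]"])
       apply (rule homI; simp add: T)
      apply (rule homI; simp add: T)
    unfolding H'_def by (simp_all add: T P PP a E3[symmetric])
  have eq4: "cmp K (cmp K (prj K [A,A] 0) (prj K [?A2,C] 0)) (tpl K (prd K [A, C]) [H', prj K [A, C] (Suc 0)]) = cmp K f (ctimes K (cdiag K A m) (idm K C))"
    unfolding H'_def by (simp add: T)
  have R1: "dag K C (fQ K n m \<delta> ?A2 C F) = cmp K H (tpl K C [x, idm K C])"
    using compid[OF Hh Gh] unfolding eq1 eq2 x_def .
  have R2: "dag K C (cmp K F (ctimes K (cdiag K ?A2 m) (idm K C))) = cmp K H' (tpl K C [y, idm K C])"
    using compid[OF H'h G'h] unfolding eq3 eq4 y_def .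
  have R: "cmp K (prj K (replicate n ?A2) q) (cmp K H (tpl K C [x, idm K C])) = cmp K H' (tpl K C [y, idm K C])"
    using Gm'[OF Fh] unfolding R1 R2 .
  have "cmp K (prj K [A,A] (Suc 0)) (cmp K (prj K (replicate n ?A2) q) (cmp K H (tpl K C [x, idm K C])))
      = cmp K (prj K (replicate n A) (\<delta> q a)) x"
    using q a by (simp add: T P PP)
  moreover have "cmp K (prj K [A,A] (Suc 0)) (cmp K H' (tpl K C [y, idm K C])) = y"
    unfolding H'_def by (simp add: T)
  ultimately show "cmp K (prj K (replicate n A) (\<delta> q a)) (dag K C (fQ K n m \<delta> A C f)) =
        dag K C (cmp K f (ctimes K (cdiag K A m) (idm K C)))"
    using R x_def y_def by simp
qed

end

theorem lemma4p3:
  fixes K :: "('o, 'm) dcat" and n m :: nat and \<delta> :: "nat \<Rightarrow> nat \<Rightarrow> nat" and q a :: nat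
  assumes "is_conway K"
    and "is_automaton n m \<delta>"
    and "q < n" and "a < m"
    and "Gamma K n m \<delta> q"
  shows "Gamma K n m \<delta> (\<delta> q a)"
proof -
  have "is_cartesian K" using assms(1) unfolding is_conway_def by blast
  then interpret aut K n m \<delta> using assms(2) by unfold_locales
  show ?thesis using main assms by blast
qed

end
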